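(* Let $i,j\geq 1$ and $n\geq 1$ be integers. Let $U(i,j,n)$ be the set of all triples $(L_1,L_2,L_3)$ of lattice walks of length $n$ with steps $U=(1,1)$ and $D=(1,-1)$, where $L_1$ starts at $(0,0)$, $L_2$ starts at $(0,2i)$ and $L_3$ starts at $(0,2i+2j)$. Let $M_{12,23}(n)$ be the set of triples $(L_1,L_2,L_3)\in U(i,j,n)$ such that $L_2$ intersects both $L_1$ and $L_3$, and let $M_{13}(n)$ be the set of triples $(L_1,L_2,L_3)\in U(i,j,n)$ such that $L_1$ intersects $L_3$. Then there exists a bijection between $M_{12,23}(n)$ and $M_{13}(n)$.
   Context: A walk of length $n$ is a lattice path consisting of $n$ steps, each an up step $(1,1)$ or a down step $(1,-1)$. Two walks are said to intersect if they share a common lattice point. *)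

theory Defs
  imports Main
begin

(* A walk of length n is a list of n steps; True = up step (1,1), False = down step (1,-1). *)
definition walks :: "nat \<Rightarrow> bool list set" where
  "walks n = {w. length w = n}"

definition step_val :: "bool \<Rightarrow> int" where
  "step_val b = (if b then 1 else -1)"

definition height :: "int \<Rightarrow> bool list \<Rightarrow> nat \<Rightarrow> int" where
  "height h w t = h + (\<Sum>k<t. step_val (w ! k))"

definition points :: "int \<Rightarrow> bool list \<Rightarrow> (int \<times> int) set" where
  "points h w = {(int t, height h w t) | t. t \<le> length w}"

definition intersect :: "int \<Rightarrow> bool list \<Rightarrow> int \<Rightarrow> bool list \<Rightarrow> bool" where
  "intersect h1 w1 h2 w2 \<longleftrightarrow> points h1 w1 \<inter> points h2 w2 \<noteq> {}"

definition U :: "nat \<Rightarrow> nat \<Rightarrow> nat \<Rightarrow> (bool list \<times> bool list \<times> bool list) set" where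
  "U i j n = walks n \<times> walks n \<times> walks n"

definition M12_23 :: "nat \<Rightarrow> nat \<Rightarrow> nat \<Rightarrow> (bool list \<times> bool list \<times> bool list) set" where
  "M12_23 i j n = {(L1, L2, L3) \<in> U i j n.
      intersect 0 L1 (2 * int i) L2 \<and> intersect (2 * int i) L2 (2 * int i + 2 * int j) L3}"

definition M13 :: "nat \<Rightarrow> nat \<Rightarrow> nat \<Rightarrow> (bool list \<times> bool list \<times> bool list) set" where
  "M13 i j n = {(L1, L2, L3) \<in> U i j n. intersect 0 L1 (2 * int i + 2 * int j) L3}"

end

theory Submission imports Defs begin

definition mt :: "int \<Rightarrow> bool list \<Rightarrow> int \<Rightarrow> bool list \<Rightarrow> nat \<Rightarrow> bool" where
  "mt h1 x h2 y t \<longleftrightarrow> t \<le> length x \<and> height h1 x t = height h2 y t"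

definition splice :: "nat \<Rightarrow> bool list \<Rightarrow> bool list \<Rightarrow> bool list" where
  "splice p x y = take p x @ drop p y"

lemma height_Suc: "height h w (Suc t) = height h w t + step_val (w ! t)"
  by (simp add: height_def)

lemma height_0[simp]: "height h w 0 = h"
  by (simp add: height_def)

lemma length_splice: "length x = length y \<Longrightarrow> p \<le> length x \<Longrightarrow> length (splice p x y) = length x"
  by (simp add: splice_def)

lemma splice_prefix:
  assumes "p \<le> length x" "t \<le> p"
  shows "height h (splice p x y) t = height h x t"
  unfolding height_def splice_def
proof -
  have "\<And>k. k < t \<Longrightarrow> (take p x @ drop p y) ! k = x ! k"
    using assms by (simp add: nth_append)
  then show "h + (\<Sum>k<t. step_val ((take p x @ drop p y) ! k)) = h + (\<Sum>k<t. step_val (x ! k))"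
    by simp
qed

lemma splice_tail:
  assumes "length x = length y" "p \<le> length x" "height h1 x p = height h2 y p"
    "p \<le> t" "t \<le> length x"
  shows "height h1 (splice p x y) t = height h2 y t"
  using assms(4,5)
proof (induction t)
  case 0
  then show ?case using assms splice_prefix by simp
next
  case (Suc t)
  show ?case
  proof (cases "p = Suc t")
    case True
    then show ?thesis using assms splice_prefix[of p x "Suc t" h1 y] by simp
  next
    case False
    then have "p \<le> t" using Suc by simp
    have "(splice p x y) ! t = y ! t"
      using assms Suc \<open>p \<le> t\<close> by (simp add: splice_def nth_append)
    then show ?thesis using Suc \<open>p \<le> t\<close> by (simp add: height_Suc)
  qed
qed

lemma splice_splice:
  assumes "p \<le> length a" "p \<le> length b"
  shows "splice p (splice p a b) (splice p b a) = a"
  using assms by (simp add: splice_def)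

lemma intersect_iff:
  "length x = length y \<Longrightarrow> intersect h1 x h2 y \<longleftrightarrow> (\<exists>t. mt h1 x h2 y t)"
  unfolding intersect_def points_def mt_def by auto

lemma ivt:
  fixes f :: "nat \<Rightarrow> int"
  assumes "f 0 > 0" "f u \<le> 0" "\<forall>k<u. f (Suc k) \<ge> f k - 2" "\<forall>k\<le>u. even (f k)"
  shows "\<exists>k\<le>u. f k = 0"
  using assms
proof (induction u)
  case 0
  then show ?case by simp
next
  case (Suc u)
  show ?case
  proof (cases "f u \<le> 0")
    case True
    then show ?thesis using Suc by (meson le_SucI less_SucI)
  next
    case False
    have "even (f u)" using Suc by simp
    with False have "f u \<ge> 2" by presburger
    moreover have "f (Suc u) \<ge> f u - 2" using Suc by simp
    moreover have "f (Suc u) \<le> 0" using Suc.prems by simp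
    ultimately have "f (Suc u) = 0" by linarith
    then show ?thesis by blast
  qed
qed

lemma diff_step: "height h2 y (Suc t) - height h1 x (Suc t) \<ge> height h2 y t - height h1 x t - 2"
  by (simp add: height_Suc step_val_def)

lemma diff_even: "even (h2 - h1) \<Longrightarrow> even (height h2 y t - height h1 x t)"
proof (induction t)
  case 0 then show ?case by simp
next
  case (Suc t)
  have e: "height h2 y (Suc t) - height h1 x (Suc t) = (height h2 y t - height h1 x t) + (step_val (y!t) - step_val (x!t))"
    by (simp add: height_Suc)
  have "even (step_val (y!t) - step_val (x!t))" by (simp add: step_val_def)
  then show ?case using Suc e by simp
qed

lemma meet_somewhere:
  assumes "h1 < h2" "h2 < h3" "even (h2 - h1)" "even (h3 - h2)"
    "length a = length b" "length b = length c" "mt h1 a h3 c u"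
  shows "\<exists>k\<le>u. mt h1 a h2 b k \<or> mt h2 b h3 c k"
proof -
  have ul: "u \<le> length a" using assms(7) mt_def by simp
  have eq: "height h1 a u = height h3 c u" using assms(7) mt_def by simp
  show ?thesis
  proof (cases "height h2 b u - height h1 a u \<le> 0")
    case True
    have "\<exists>k\<le>u. height h2 b k - height h1 a k = 0"
    proof (rule ivt[where f="\<lambda>t. height h2 b t - height h1 a t"])
      show "0 < height h2 b 0 - height h1 a 0" using assms(1) by simp
      show "height h2 b u - height h1 a u \<le> 0" by fact
      show "\<forall>k<u. height h2 b k - height h1 a k - 2 \<le> height h2 b (Suc k) - height h1 a (Suc k)"
        using diff_step by blast
      show "\<forall>k\<le>u. even (height h2 b k - height h1 a k)"
        using diff_even assms(3) by blast
    qed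
    then obtain k where "k \<le> u" "height h2 b k = height h1 a k" by auto
    then show ?thesis using ul unfolding mt_def by (metis order_trans)
  next
    case False
    have "\<exists>k\<le>u. height h3 c k - height h2 b k = 0"
    proof (rule ivt[where f="\<lambda>t. height h3 c t - height h2 b t"])
      show "0 < height h3 c 0 - height h2 b 0" using assms(2) by simp
      show "height h3 c u - height h2 b u \<le> 0" using False eq by linarith
      show "\<forall>k<u. height h3 c k - height h2 b k - 2 \<le> height h3 c (Suc k) - height h2 b (Suc k)"
        using diff_step by blast
      show "\<forall>k\<le>u. even (height h3 c k - height h2 b k)"
        using diff_even assms(4) by blast
    qed
    then obtain k where "k \<le> u" "height h3 c k = height h2 b k" by auto
    then show ?thesis using ul assms(5) unfolding mt_def by (metis order_trans)
  qed
qed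


definition F :: "int \<Rightarrow> int \<Rightarrow> int \<Rightarrow> bool list \<times> bool list \<times> bool list \<Rightarrow> bool list \<times> bool list \<times> bool list" where
  "F h1 h2 h3 = (\<lambda>(a,b,c).
     if (\<exists>t. mt h1 a h2 b t) \<and> (\<not>(\<exists>t. mt h2 b h3 c t) \<or> (LEAST t. mt h1 a h2 b t) \<le> (LEAST t. mt h2 b h3 c t))
     then (splice (LEAST t. mt h1 a h2 b t) a b, splice (LEAST t. mt h1 a h2 b t) b a, c)
     else if (\<exists>t. mt h2 b h3 c t)
     then (a, splice (LEAST t. mt h2 b h3 c t) b c, splice (LEAST t. mt h2 b h3 c t) c b)
     else (a,b,c))"

lemma F_case1:
  assumes "\<exists>t. mt h1 a h2 b t" "\<not>(\<exists>t. mt h2 b h3 c t) \<or> (LEAST t. mt h1 a h2 b t) \<le> (LEAST t. mt h2 b h3 c t)"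
  shows "F h1 h2 h3 (a,b,c) = (splice (LEAST t. mt h1 a h2 b t) a b, splice (LEAST t. mt h1 a h2 b t) b a, c)"
  using assms by (simp add: F_def)

lemma F_case2:
  assumes "\<exists>t. mt h2 b h3 c t" "\<not>(\<exists>t. mt h1 a h2 b t) \<or> (LEAST t. mt h2 b h3 c t) < (LEAST t. mt h1 a h2 b t)"
  shows "F h1 h2 h3 (a,b,c) = (a, splice (LEAST t. mt h2 b h3 c t) b c, splice (LEAST t. mt h2 b h3 c t) c b)"
  using assms by (auto simp add: F_def)

lemma F_case3:
  assumes "\<not>(\<exists>t. mt h2 b h3 c t)" "\<not>(\<exists>t. mt h1 a h2 b t)"
  shows "F h1 h2 h3 (a,b,c) = (a,b,c)"
  using assms by (auto simp add: F_def)

lemma mt_splice_prefix: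
  assumes "p \<le> length x" "t \<le> p" "length (splice p x y) = length x"
  shows "mt h1 (splice p x y) h2 z t \<longleftrightarrow> mt h1 x h2 z t"
    and "mt h2 z h1 (splice p x y) t \<longleftrightarrow> mt h2 z h1 x t"
  using assms splice_prefix[OF assms(1,2)] unfolding mt_def by auto

lemma F_invol:
  assumes "length a = n" "length b = n" "length c = n"
  shows "F h1 h2 h3 (F h1 h2 h3 (a,b,c)) = (a,b,c)"
proof -
  let ?P = "\<lambda>t. mt h1 a h2 b t" and ?Q = "\<lambda>t. mt h2 b h3 c t"
  show ?thesis
  proof (cases "Ex ?P \<and> (\<not> Ex ?Q \<or> Least ?P \<le> Least ?Q)")
    case True
    define p where "p = Least ?P"
    have Pp: "?P p" using True LeastI_ex p_def by metis
    have pn: "p \<le> n" using Pp assms mt_def by simp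
    have nP: "\<And>t. t < p \<Longrightarrow> \<not> ?P t" using not_less_Least p_def by blast
    have nQ: "\<And>t. t < p \<Longrightarrow> \<not> ?Q t"
      using True not_less_Least p_def by (metis order_less_le_trans)
    define a' where "a' = splice p a b"
    define b' where "b' = splice p b a"
    have la: "length a' = n" "length b' = n" using assms pn a'_def b'_def length_splice by auto
    have ha: "\<And>t. t \<le> p \<Longrightarrow> height h a' t = height h a t" for h
      using splice_prefix assms pn a'_def by simp
    have hb: "\<And>t. t \<le> p \<Longrightarrow> height h b' t = height h b t" for h
      using splice_prefix assms pn b'_def by simp
    have P'p: "mt h1 a' h2 b' p" using Pp ha hb la assms unfolding mt_def by simp
    have nP': "\<And>t. t < p \<Longrightarrow> \<not> mt h1 a' h2 b' t"
      using nP ha hb la assms unfolding mt_def by simp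
    have lp: "(LEAST t. mt h1 a' h2 b' t) = p"
      by (rule Least_equality) (use P'p nP' in \<open>auto simp: not_less[symmetric]\<close>)
    have nQ': "\<And>t. t < p \<Longrightarrow> \<not> mt h2 b' h3 c t"
      using nQ hb la assms unfolding mt_def by simp
    have c1: "\<not> (\<exists>t. mt h2 b' h3 c t) \<or> p \<le> (LEAST t. mt h2 b' h3 c t)"
      by (metis LeastI_ex nQ' not_le)
    have F1: "F h1 h2 h3 (a,b,c) = (a', b', c)"
      using F_case1[of h1 a h2 b h3 c] True p_def a'_def b'_def by simp
    have F2: "F h1 h2 h3 (a',b',c) = (splice p a' b', splice p b' a', c)"
      using F_case1[of h1 a' h2 b' h3 c] P'p lp c1 by auto
    show ?thesis using F1 F2 a'_def b'_def splice_splice assms pn by simp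
  next
    case False
    show ?thesis
    proof (cases "Ex ?Q")
      case True
      with False have c2: "\<not> Ex ?P \<or> Least ?Q < Least ?P" by auto
      define q where "q = Least ?Q"
      have Qq: "?Q q" using True LeastI_ex q_def by metis
      have qn: "q \<le> n" using Qq assms mt_def by simp
      have nQ: "\<And>t. t < q \<Longrightarrow> \<not> ?Q t" using not_less_Least q_def by blast
      have nP: "\<And>t. t \<le> q \<Longrightarrow> \<not> ?P t"
        using c2 q_def by (metis Least_le not_le order_le_less_trans)
      define b' where "b' = splice q b c"
      define c' where "c' = splice q c b"
      have lb: "length b' = n" "length c' = n" using assms qn b'_def c'_def length_splice by auto
      have hb: "\<And>t. t \<le> q \<Longrightarrow> height h b' t = height h b t" for h
        using splice_prefix assms qn b'_def by simp
      have hc: "\<And>t. t \<le> q \<Longrightarrow> height h c' t = height h c t" for h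
        using splice_prefix assms qn c'_def by simp
      have Q'q: "mt h2 b' h3 c' q" using Qq hb hc lb assms unfolding mt_def by simp
      have nQ': "\<And>t. t < q \<Longrightarrow> \<not> mt h2 b' h3 c' t"
        using nQ hb hc lb assms unfolding mt_def by simp
      have lq: "(LEAST t. mt h2 b' h3 c' t) = q"
        by (rule Least_equality) (use Q'q nQ' in \<open>auto simp: not_less[symmetric]\<close>)
      have nP': "\<And>t. t \<le> q \<Longrightarrow> \<not> mt h1 a h2 b' t"
        using nP hb lb assms unfolding mt_def by simp
      have c2': "\<not> (\<exists>t. mt h1 a h2 b' t) \<or> q < (LEAST t. mt h1 a h2 b' t)"
        by (metis LeastI_ex nP' not_le)
      have F1: "F h1 h2 h3 (a,b,c) = (a, b', c')"
        using F_case2[of h2 b h3 c h1 a] True c2 q_def b'_def c'_def by simp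
      have F2: "F h1 h2 h3 (a,b',c') = (a, splice q b' c', splice q c' b')"
        using F_case2[of h2 b' h3 c' h1 a] Q'q lq c2' by auto
      show ?thesis using F1 F2 b'_def c'_def splice_splice assms qn by simp
    next
      case False2: False
      with False have "\<not> Ex ?P" by auto
      then show ?thesis using F_case3 False2 by simp
    qed
  qed
qed


lemma F_len:
  assumes "length a = n" "length b = n" "length c = n" "F h1 h2 h3 (a,b,c) = (a',b',c')"
  shows "length a' = n \<and> length b' = n \<and> length c' = n"
proof -
  let ?P = "\<lambda>t. mt h1 a h2 b t" and ?Q = "\<lambda>t. mt h2 b h3 c t"
  show ?thesis
  proof (cases "Ex ?P \<and> (\<not> Ex ?Q \<or> Least ?P \<le> Least ?Q)")
    case True
    have "Least ?P \<le> n" using True LeastI_ex assms mt_def by metis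
    then show ?thesis using F_case1[of h1 a h2 b h3 c] True assms length_splice by auto
  next
    case False
    show ?thesis
    proof (cases "Ex ?Q")
      case True
      have "Least ?Q \<le> n" using True LeastI_ex assms mt_def by metis
      then show ?thesis using F_case2[of h2 b h3 c h1 a] True False assms length_splice by auto
    next
      case False2: False
      then show ?thesis using F_case3[of h2 b h3 c h1 a] False assms by auto
    qed
  qed
qed

lemma F_AB_C:
  assumes "length a = n" "length b = n" "length c = n" "F h1 h2 h3 (a,b,c) = (a',b',c')"
    "\<exists>t. mt h1 a h2 b t" "\<exists>t. mt h2 b h3 c t"
  shows "\<exists>t. mt h1 a' h3 c' t"
proof -
  let ?P = "\<lambda>t. mt h1 a h2 b t" and ?Q = "\<lambda>t. mt h2 b h3 c t"
  define p where "p = Least ?P"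
  define q where "q = Least ?Q"
  have Pp: "?P p" using assms(5) LeastI_ex p_def by metis
  have Qq: "?Q q" using assms(6) LeastI_ex q_def by metis
  have pn: "p \<le> n" "q \<le> n" using Pp Qq assms mt_def by auto
  show ?thesis
  proof (cases "p \<le> q")
    case True
    then have "F h1 h2 h3 (a,b,c) = (splice p a b, splice p b a, c)"
      using F_case1[of h1 a h2 b h3 c] assms p_def q_def by simp
    then have e: "a' = splice p a b" "c' = c" using assms(4) by auto
    have "height h1 a' q = height h2 b q"
      using e splice_tail[of a b p h1 h2 q] assms pn Pp True mt_def by simp
    then have "mt h1 a' h3 c' q" using Qq e assms length_splice pn unfolding mt_def by simp
    then show ?thesis by blast
  next
    case False
    then have "F h1 h2 h3 (a,b,c) = (a, splice q b c, splice q c b)"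
      using F_case2[of h2 b h3 c h1 a] assms p_def q_def by simp
    then have e: "a' = a" "c' = splice q c b" using assms(4) by auto
    have "height h3 c' p = height h2 b p"
      using e splice_tail[of c b q h3 h2 p] assms pn Qq False mt_def by simp
    then have "mt h1 a' h3 c' p" using Pp e assms unfolding mt_def by simp
    then show ?thesis by blast
  qed
qed

lemma F_C_AB:
  assumes "h1 < h2" "h2 < h3" "even (h2 - h1)" "even (h3 - h2)"
    "length a = n" "length b = n" "length c = n" "F h1 h2 h3 (a,b,c) = (a',b',c')"
    "mt h1 a h3 c u"
  shows "(\<exists>t. mt h1 a' h2 b' t) \<and> (\<exists>t. mt h2 b' h3 c' t)"
proof -
  let ?P = "\<lambda>t. mt h1 a h2 b t" and ?Q = "\<lambda>t. mt h2 b h3 c t"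
  obtain k where k: "k \<le> u" "?P k \<or> ?Q k"
    using meet_somewhere[OF assms(1-4) _ _ assms(9)] assms by auto
  have un: "u \<le> n" and eq: "height h1 a u = height h3 c u" using assms mt_def by auto
  show ?thesis
  proof (cases "Ex ?P \<and> (\<not> Ex ?Q \<or> Least ?P \<le> Least ?Q)")
    case True
    define p where "p = Least ?P"
    have Pp: "?P p" using True LeastI_ex p_def by metis
    have pn: "p \<le> n" using Pp assms mt_def by simp
    have pu: "p \<le> u"
      using k True p_def by (meson Least_le order_trans)
    have "F h1 h2 h3 (a,b,c) = (splice p a b, splice p b a, c)"
      using F_case1[of h1 a h2 b h3 c] True p_def by simp
    then have e: "a' = splice p a b" "b' = splice p b a" "c' = c" using assms(8) by auto
    have "height h2 b' u = height h1 a u"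
      using e splice_tail[of b a p h2 h1 u] assms pn Pp pu un mt_def by simp
    then have 1: "mt h2 b' h3 c' u" using e eq assms length_splice pn un unfolding mt_def by simp
    have "mt h1 a' h2 b' p" using e Pp splice_prefix assms pn length_splice unfolding mt_def by simp
    then show ?thesis using 1 by blast
  next
    case False
    show ?thesis
    proof (cases "Ex ?Q")
      case True
      with False have c2: "\<not> Ex ?P \<or> Least ?Q < Least ?P" by auto
      define q where "q = Least ?Q"
      have Qq: "?Q q" using True LeastI_ex q_def by metis
      have qn: "q \<le> n" using Qq assms mt_def by simp
      have qu: "q \<le> u"
        using k c2 q_def by (meson Least_le order_trans less_imp_le)
      have "F h1 h2 h3 (a,b,c) = (a, splice q b c, splice q c b)"
        using F_case2[of h2 b h3 c h1 a] True c2 q_def by simp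
      then have e: "a' = a" "b' = splice q b c" "c' = splice q c b" using assms(8) by auto
      have "height h2 b' u = height h3 c u"
        using e splice_tail[of b c q h2 h3 u] assms qn Qq qu un mt_def by simp
      then have 1: "mt h1 a' h2 b' u" using e eq assms un unfolding mt_def by simp
      have "mt h2 b' h3 c' q" using e Qq splice_prefix assms qn length_splice unfolding mt_def by simp
      then show ?thesis using 1 by blast
    next
      case False2: False
      with False have "\<not> Ex ?P" by auto
      then show ?thesis using k False2 by blast
    qed
  qed
qed


theorem theorem2p1:
  fixes i j n :: nat
  assumes "i \<ge> 1" and "j \<ge> 1" and "n \<ge> 1"
  shows "\<exists>f. bij_betw f (M12_23 i j n) (M13 i j n)"
proof -
  define h2 :: int where "h2 = 2 * int i"
  define h3 :: int where "h3 = 2 * int i + 2 * int j"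
  have hs: "(0::int) < h2" "h2 < h3" "even (h2 - 0)" "even (h3 - h2)"
    using assms h2_def h3_def by auto
  let ?f = "F 0 h2 h3"
  have inv: "\<And>x. x \<in> U i j n \<Longrightarrow> ?f (?f x) = x"
    unfolding U_def walks_def using F_invol by auto
  have AB: "?f x \<in> M13 i j n" if "x \<in> M12_23 i j n" for x
  proof -
    obtain a b c where x: "x = (a,b,c)" by (cases x)
    obtain a' b' c' where y: "?f (a,b,c) = (a',b',c')" by (cases "?f (a,b,c)")
    have l: "length a = n" "length b = n" "length c = n"
      using that x by (auto simp: M12_23_def U_def walks_def)
    have m: "\<exists>t. mt 0 a h2 b t" "\<exists>t. mt h2 b h3 c t"
      using that x l intersect_iff h2_def h3_def by (auto simp: M12_23_def)
    have l': "length a' = n \<and> length b' = n \<and> length c' = n" using F_len[OF l y] .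
    have "\<exists>t. mt 0 a' h3 c' t" using F_AB_C[OF l y m] .
    then show ?thesis using l' x y intersect_iff h3_def
      by (auto simp: M13_def U_def walks_def)
  qed
  have CA: "?f x \<in> M12_23 i j n" if "x \<in> M13 i j n" for x
  proof -
    obtain a b c where x: "x = (a,b,c)" by (cases x)
    obtain a' b' c' where y: "?f (a,b,c) = (a',b',c')" by (cases "?f (a,b,c)")
    have l: "length a = n" "length b = n" "length c = n"
      using that x by (auto simp: M13_def U_def walks_def)
    have "\<exists>t. mt 0 a h3 c t"
      using that x l intersect_iff h3_def by (auto simp: M13_def)
    then obtain u where u: "mt 0 a h3 c u" by blast
    have l': "length a' = n \<and> length b' = n \<and> length c' = n" using F_len[OF l y] .
    have "(\<exists>t. mt 0 a' h2 b' t) \<and> (\<exists>t. mt h2 b' h3 c' t)" using F_C_AB[OF hs l y u] .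
    then show ?thesis using l' x y intersect_iff h2_def h3_def
      by (auto simp: M12_23_def U_def walks_def)
  qed
  have "bij_betw ?f (M12_23 i j n) (M13 i j n)"
  proof (rule bij_betw_byWitness[where f'="?f"])
    show "\<forall>a\<in>M12_23 i j n. ?f (?f a) = a" using inv by (auto simp: M12_23_def)
    show "\<forall>a\<in>M13 i j n. ?f (?f a) = a" using inv by (auto simp: M13_def)
    show "?f ` M12_23 i j n \<subseteq> M13 i j n" using AB by auto
    show "?f ` M13 i j n \<subseteq> M12_23 i j n" using CA by auto
  qed
  then show ?thesis by blast
qed

end
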